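(* Let $R_{approach}=\sup\{R\in\mathbb R: R\le G(R)\}$. Then $R_{static}\le R_{approach}$, where $$R_{static}=\sup_{w\in\Delta_K}\ \min_{i\ne j}\ \sup_{s\in[0,1]}\ -\sum_{a\in[K]}w_a\log\Big(\sum_{x\in\mathcal X}\nu^i_a(x)^s\nu^j_a(x)^{1-s}\Big).$$
   Context: $\mathcal X$ finite; $\Delta_K,\Delta_m$ the probability simplices on $[K],[m]$; $m\ge2$ bandits $\nu^1,\dots,\nu^m$, $\nu^i=(\nu^i_a)_{a\in[K]}$, each $\nu^i_a$ a full-support distribution on $\mathcal X$. For $\beta\in\Delta_m$ let $\phi_a(\beta)=-\log\sum_x\prod_i\nu^i_a(x)^{\beta_i}$, $I(\beta)=\min_a\phi_a(\beta)$, $L(\beta)=\max_a\phi_a(\beta)$. For $i<j$, $b\in[0,1]$, $\beta_{ij}(b)=b\,e_i+(1-b)e_j$. For $R\in\mathbb R$, $M(R)=\{(i,j):i<j,\ \sup_{b}I(\beta_{ij}(b))<R\}$. Define $$G(R)=\begin{cases}+\infty,&R<\min_{i<j}\sup_{b\in[0,1]}I(\beta_{ij}(b)),\\ \sup_{(\tilde\beta_{ij})}\ \inf_{\lambda\in\Delta_{M(R)}}L\Big(\sum_{(i,j)\in M(R)}\lambda_{ij}\tilde\beta_{ij}\Big),&\text{otherwise},\end{cases}$$ where the supremum is over all choices of points $\tilde\beta_{ij}\in\{\beta_{ij}(b):b\in[0,1]\}$ for $(i,j)\in M(R)$, and an infimum over an empty index set is $+\infty$. *)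

theory Defs
  imports "HOL-Analysis.Analysis"
begin

text \<open>Conventions: arms are indexed by {..<K}, bandits by {..<m}; the alphabet is a
finite type 'x.  nu i a x is the probability of x under arm a of bandit i.\<close>

definition prob_simplex :: "nat \<Rightarrow> (nat \<Rightarrow> real) set" where
  "prob_simplex n = {w. (\<forall>i<n. 0 \<le> w i) \<and> (\<forall>i\<ge>n. w i = 0) \<and> (\<Sum>i<n. w i) = 1}"

definition phi :: "(nat \<Rightarrow> nat \<Rightarrow> 'x::finite \<Rightarrow> real) \<Rightarrow> nat \<Rightarrow> nat \<Rightarrow> (nat \<Rightarrow> real) \<Rightarrow> real" where
  "phi nu m a \<beta> = - ln (\<Sum>x\<in>UNIV. \<Prod>i<m. nu i a x powr \<beta> i)"

definition Ifun :: "(nat \<Rightarrow> nat \<Rightarrow> 'x::finite \<Rightarrow> real) \<Rightarrow> nat \<Rightarrow> nat \<Rightarrow> (nat \<Rightarrow> real) \<Rightarrow> real" where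
  "Ifun nu K m \<beta> = Min ((\<lambda>a. phi nu m a \<beta>) ` {..<K})"

definition Lfun :: "(nat \<Rightarrow> nat \<Rightarrow> 'x::finite \<Rightarrow> real) \<Rightarrow> nat \<Rightarrow> nat \<Rightarrow> (nat \<Rightarrow> real) \<Rightarrow> real" where
  "Lfun nu K m \<beta> = Max ((\<lambda>a. phi nu m a \<beta>) ` {..<K})"

definition beta_pair :: "nat \<Rightarrow> nat \<Rightarrow> real \<Rightarrow> nat \<Rightarrow> real" where
  "beta_pair i j b = (\<lambda>k. if k = i then b else if k = j then 1 - b else 0)"

definition Spair :: "(nat \<Rightarrow> nat \<Rightarrow> 'x::finite \<Rightarrow> real) \<Rightarrow> nat \<Rightarrow> nat \<Rightarrow> nat \<Rightarrow> nat \<Rightarrow> ereal" where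
  "Spair nu K m i j = (SUP b\<in>{0..1}. ereal (Ifun nu K m (beta_pair i j b)))"

definition Mset :: "(nat \<Rightarrow> nat \<Rightarrow> 'x::finite \<Rightarrow> real) \<Rightarrow> nat \<Rightarrow> nat \<Rightarrow> real \<Rightarrow> (nat \<times> nat) set" where
  "Mset nu K m R = {(i, j). i < j \<and> j < m \<and> Spair nu K m i j < ereal R}"

definition Gfun :: "(nat \<Rightarrow> nat \<Rightarrow> 'x::finite \<Rightarrow> real) \<Rightarrow> nat \<Rightarrow> nat \<Rightarrow> real \<Rightarrow> ereal" where
  "Gfun nu K m R =
    (if ereal R < Min {Spair nu K m i j | i j. i < j \<and> j < m} then \<infinity>
     else (let M = Mset nu K m R in
       SUP b\<in>{b :: nat \<times> nat \<Rightarrow> real. \<forall>p\<in>M. b p \<in> {0..1}}.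
         INF lam\<in>{lam :: nat \<times> nat \<Rightarrow> real. (\<forall>p\<in>M. 0 \<le> lam p) \<and> (\<Sum>p\<in>M. lam p) = 1}.
           ereal (Lfun nu K m (\<lambda>k. \<Sum>p\<in>M. lam p * beta_pair (fst p) (snd p) (b p) k))))"

definition R_approach :: "(nat \<Rightarrow> nat \<Rightarrow> 'x::finite \<Rightarrow> real) \<Rightarrow> nat \<Rightarrow> nat \<Rightarrow> ereal" where
  "R_approach nu K m = Sup {ereal R | R. ereal R \<le> Gfun nu K m R}"

definition R_static :: "(nat \<Rightarrow> nat \<Rightarrow> 'x::finite \<Rightarrow> real) \<Rightarrow> nat \<Rightarrow> nat \<Rightarrow> ereal" where
  "R_static nu K m =
    (SUP w\<in>prob_simplex K. Min {(SUP s\<in>{0..1}. ereal (- (\<Sum>a<K. w a *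
          ln (\<Sum>x\<in>UNIV. nu i a x powr s * nu j a x powr (1 - s))))) | i j. i < m \<and> j < m \<and> i \<noteq> j})"

end

theory Submission imports Defs "HOL-Analysis.Analysis" begin

lemma lse_convex:
  fixes c :: "'p \<Rightarrow> 'x::finite \<Rightarrow> real" and l :: "'p \<Rightarrow> real"
  assumes P: "finite P" "P \<noteq> {}" and l: "\<And>p. p\<in>P \<Longrightarrow> 0 \<le> l p" "sum l P = 1"
  shows "ln (\<Sum>x\<in>UNIV. exp (\<Sum>p\<in>P. l p * c p x)) \<le> (\<Sum>p\<in>P. l p * ln (\<Sum>x\<in>UNIV. exp (c p x)))"
proof -
  define S where "S p = (\<Sum>x\<in>UNIV. exp (c p x))" for p
  have Spos: "S p > 0" for p unfolding S_def by (intro sum_pos) auto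
  have Sne: "S p \<noteq> 0" for p using Spos[of p] by simp
  define T where "T = (\<Sum>p\<in>P. l p * ln (S p))"
  have pt: "exp (\<Sum>p\<in>P. l p * c p x) * exp (- T) \<le> (\<Sum>p\<in>P. l p * (exp (c p x) / S p))" for x
  proof -
    have "(\<Sum>p\<in>P. l p * ln (exp (c p x) / S p)) \<le> ln (\<Sum>p\<in>P. l p *\<^sub>R (exp (c p x) / S p))"
      by (rule concave_on_sum[OF P ln_concave l(2)]) (use l(1) Spos in auto)
    moreover have "(\<Sum>p\<in>P. l p * ln (exp (c p x) / S p)) = (\<Sum>p\<in>P. l p * c p x) - T"
    proof -
      have "(\<Sum>p\<in>P. l p * ln (exp (c p x) / S p)) = (\<Sum>p\<in>P. l p * c p x - l p * ln (S p))"
        by (rule sum.cong) (use Spos in \<open>auto simp: ln_div right_diff_distrib Sne\<close>)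
      thus ?thesis unfolding T_def by (simp add: sum_subtractf)
    qed
    ultimately have "(\<Sum>p\<in>P. l p * c p x) - T \<le> ln (\<Sum>p\<in>P. l p * (exp (c p x) / S p))" by simp
    moreover have "(\<Sum>p\<in>P. l p * (exp (c p x) / S p)) > 0"
    proof -
      have "\<exists>q\<in>P. l q > 0"
      proof (rule ccontr)
        assume "\<not> ?thesis"
        hence "sum l P \<le> 0" by (intro sum_nonpos) auto
        with l(2) show False by simp
      qed
      then obtain q where q: "q \<in> P" "l q > 0" by blast
      have "0 < l q * (exp (c q x) / S q)" using q Spos by simp
      also have "\<dots> \<le> (\<Sum>p\<in>P. l p * (exp (c p x) / S p))"
      proof (rule member_le_sum[OF q(1) _ P(1)])
        fix p assume "p \<in> P - {q}"
        hence "0 \<le> l p" using l(1) by blast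
        moreover have "0 \<le> exp (c p x) / S p" using Spos[of p] by simp
        ultimately show "0 \<le> l p * (exp (c p x) / S p)" by (rule mult_nonneg_nonneg)
      qed
      finally show ?thesis .
    qed
    ultimately have "exp ((\<Sum>p\<in>P. l p * c p x) - T) \<le> (\<Sum>p\<in>P. l p * (exp (c p x) / S p))"
      by (metis exp_le_cancel_iff exp_ln)
    thus ?thesis by (simp add: exp_diff exp_minus divide_inverse)
  qed
  have "(\<Sum>x\<in>UNIV. exp (\<Sum>p\<in>P. l p * c p x) * exp (- T)) \<le> (\<Sum>x\<in>UNIV. \<Sum>p\<in>P. l p * (exp (c p x) / S p))"
    by (rule sum_mono) (rule pt)
  also have "\<dots> = (\<Sum>p\<in>P. l p * (S p / S p))"
  proof (subst sum.swap, rule sum.cong[OF refl])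
    fix p
    have "(\<Sum>x\<in>UNIV. l p * (exp (c p x) / S p)) = l p * ((\<Sum>x\<in>UNIV. exp (c p x)) / S p)"
      by (simp only: sum_distrib_left[symmetric] sum_divide_distrib[symmetric])
    thus "(\<Sum>x\<in>UNIV. l p * (exp (c p x) / S p)) = l p * (S p / S p)" by (simp only: S_def)
  qed
  also have "\<dots> = 1" using Sne l(2) by simp
  finally have "(\<Sum>x\<in>UNIV. exp (\<Sum>p\<in>P. l p * c p x)) \<le> exp T"
    by (simp add: sum_divide_distrib[symmetric] exp_minus divide_inverse[symmetric])
  moreover have "(\<Sum>x\<in>UNIV. exp (\<Sum>p\<in>P. l p * c p x)) > 0" by (intro sum_pos) auto
  ultimately show ?thesis unfolding T_def[symmetric] S_def[symmetric]
    by (metis ln_exp ln_le_cancel_iff exp_gt_zero order_less_le_trans)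
qed

lemma phi_eq:
  fixes nu :: "nat \<Rightarrow> nat \<Rightarrow> 'x \<Rightarrow> real"
  assumes "\<And>i. i < m \<Longrightarrow> 0 < nu i a x" 
  shows "(\<Prod>i<m. nu i a x powr \<beta> i) = exp (\<Sum>i<m. \<beta> i * ln (nu i a x))"
proof -
  have "(\<Prod>i<m. nu i a x powr \<beta> i) = (\<Prod>i<m. exp (\<beta> i * ln (nu i a x)))"
  proof (rule prod.cong[OF refl])
    fix i assume "i \<in> {..<m}"
    hence "0 < nu i a x" using assms[of i] by simp
    hence "nu i a x \<noteq> 0" by (metis less_irrefl)
    thus "nu i a x powr \<beta> i = exp (\<beta> i * ln (nu i a x))" by (simp add: powr_def mult.commute)
  qed
  thus ?thesis by (simp add: exp_sum)
qed

lemma phi_eq2: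
  assumes "\<And>i x. i < m \<Longrightarrow> 0 < nu i a x" 
  shows "phi nu m a \<beta> = - ln (\<Sum>x\<in>UNIV. exp (\<Sum>i<m. \<beta> i * ln (nu i a x)))"
  unfolding phi_def using phi_eq[of m nu a] assms by simp

lemma pair_sum:
  fixes L :: "nat \<Rightarrow> real"
  assumes "i < j" "j < m"
  shows "(\<Sum>k<m. beta_pair i j s k * L k) = s * L i + (1 - s) * L j"
proof -
  have "(\<Sum>k<m. beta_pair i j s k * L k) = (\<Sum>k<m. (if k = i then s * L i else 0) + (if k = j then (1-s) * L j else 0))"
    by (rule sum.cong) (use assms in \<open>auto simp: beta_pair_def\<close>)
  also have "\<dots> = s * L i + (1 - s) * L j"
    using assms by (simp add: sum.distrib)
  finally show ?thesis .
qed

lemma pair_term: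
  assumes pos: "\<And>i x. i < m \<Longrightarrow> 0 < nu i a x" and ij: "i < j" "j < m"
  shows "(\<Sum>x\<in>UNIV. nu i a x powr s * nu j a x powr (1 - s)) = (\<Sum>x\<in>UNIV. \<Prod>k<m. nu k a x powr beta_pair i j s k)"
proof (rule sum.cong[OF refl])
  fix x
  have "(\<Prod>k<m. nu k a x powr beta_pair i j s k) = exp (\<Sum>k<m. beta_pair i j s k * ln (nu k a x))"
    by (rule phi_eq) (use pos in auto)
  also have "\<dots> = exp (s * ln (nu i a x) + (1 - s) * ln (nu j a x))"
    using pair_sum[OF ij] by simp
  also have "\<dots> = nu i a x powr s * nu j a x powr (1 - s)"
    using pos[of i x] pos[of j x] ij by (simp add: powr_def exp_add mult.commute)
  finally show "nu i a x powr s * nu j a x powr (1 - s) = (\<Prod>k<m. nu k a x powr beta_pair i j s k)" by simp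
qed

lemma phi_concave:
  fixes nu :: "nat \<Rightarrow> nat \<Rightarrow> 'x::finite \<Rightarrow> real"
  assumes pos: "\<And>i x. i < m \<Longrightarrow> 0 < nu i a x"
    and P: "finite P" "P \<noteq> {}" and l: "\<And>p. p\<in>P \<Longrightarrow> 0 \<le> l p" "sum l P = 1"
  shows "(\<Sum>p\<in>P. l p * phi nu m a (bs p)) \<le> phi nu m a (\<lambda>k. \<Sum>p\<in>P. l p * bs p k)"
proof -
  define c where "c p x = (\<Sum>i<m. bs p i * ln (nu i a x))" for p x
  have eq: "(\<Sum>i<m. (\<Sum>p\<in>P. l p * bs p i) * ln (nu i a x)) = (\<Sum>p\<in>P. l p * c p x)" for x
    unfolding c_def by (simp add: sum_distrib_right sum_distrib_left mult.assoc sum.swap[of _ P])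
  have "ln (\<Sum>x\<in>UNIV. exp (\<Sum>p\<in>P. l p * c p x)) \<le> (\<Sum>p\<in>P. l p * ln (\<Sum>x\<in>UNIV. exp (c p x)))"
    by (rule lse_convex[OF P l])
  moreover have "phi nu m a (\<lambda>k. \<Sum>p\<in>P. l p * bs p k) = - ln (\<Sum>x\<in>UNIV. exp (\<Sum>p\<in>P. l p * c p x))"
    using phi_eq2[of m nu a, OF pos] eq by simp
  moreover have "phi nu m a (bs p) = - ln (\<Sum>x\<in>UNIV. exp (c p x))" for p
    using phi_eq2[of m nu a, OF pos] unfolding c_def by simp
  ultimately show ?thesis by (simp add: sum_negf)
qed


theorem mainTheorem17:
  fixes nu :: "nat \<Rightarrow> nat \<Rightarrow> 'x::finite \<Rightarrow> real" and K m :: nat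
  assumes "K \<ge> 1" and "m \<ge> 2"
    and "\<And>i a x. i < m \<Longrightarrow> a < K \<Longrightarrow> 0 < nu i a x"
    and "\<And>i a. i < m \<Longrightarrow> a < K \<Longrightarrow> (\<Sum>x\<in>UNIV. nu i a x) = 1"
  shows "R_static nu K m \<le> R_approach nu K m"
proof -
  note pos = assms(3)
  define F where "F w \<beta> = (\<Sum>a<K. w a * phi nu m a \<beta>)" for w :: "nat \<Rightarrow> real" and \<beta>
  have FL: "F w \<beta> \<le> Lfun nu K m \<beta>" if w: "w \<in> prob_simplex K" for w \<beta>
  proof -
    have fin: "finite ((\<lambda>a. phi nu m a \<beta>) ` {..<K})" by simp
    have "F w \<beta> \<le> (\<Sum>a<K. w a * Lfun nu K m \<beta>)"
      unfolding F_def
    proof (rule sum_mono)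
      fix a assume "a \<in> {..<K}"
      hence "phi nu m a \<beta> \<le> Lfun nu K m \<beta>" unfolding Lfun_def by (intro Max_ge[OF fin]) auto
      moreover have "0 \<le> w a" using w \<open>a \<in> {..<K}\<close> by (auto simp: prob_simplex_def)
      ultimately show "w a * phi nu m a \<beta> \<le> w a * Lfun nu K m \<beta>" by (rule mult_left_mono)
    qed
    also have "\<dots> = Lfun nu K m \<beta>" using w by (simp add: prob_simplex_def sum_distrib_right[symmetric])
    finally show ?thesis .
  qed
  have Fconc: "(\<Sum>p\<in>P. l p * F w (bs p)) \<le> F w (\<lambda>k. \<Sum>p\<in>P. l p * bs p k)"
    if w: "w \<in> prob_simplex K" and P: "finite P" "P \<noteq> {}"
      and l: "\<And>p. p\<in>P \<Longrightarrow> 0 \<le> l p" "sum l P = 1" for w P l and bs :: "'p \<Rightarrow> nat \<Rightarrow> real"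
  proof -
    have "(\<Sum>p\<in>P. l p * F w (bs p)) = (\<Sum>a<K. w a * (\<Sum>p\<in>P. l p * phi nu m a (bs p)))"
      unfolding F_def by (simp add: sum_distrib_left sum.swap[of _ P] mult.left_commute)
    also have "\<dots> \<le> F w (\<lambda>k. \<Sum>p\<in>P. l p * bs p k)"
      unfolding F_def
    proof (rule sum_mono)
      fix a assume a: "a \<in> {..<K}"
      have "(\<Sum>p\<in>P. l p * phi nu m a (bs p)) \<le> phi nu m a (\<lambda>k. \<Sum>p\<in>P. l p * bs p k)"
        by (rule phi_concave[OF _ P l]) (use pos a in auto)
      moreover have "0 \<le> w a" using w a by (auto simp: prob_simplex_def)
      ultimately show "w a * (\<Sum>p\<in>P. l p * phi nu m a (bs p)) \<le> w a * phi nu m a (\<lambda>k. \<Sum>p\<in>P. l p * bs p k)"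
        by (rule mult_left_mono)
    qed
    finally show ?thesis .
  qed
  have term_eq: "- (\<Sum>a<K. w a * ln (\<Sum>x\<in>UNIV. nu i a x powr s * nu j a x powr (1 - s)))
      = F w (beta_pair i j s)" if ij: "i < j" "j < m" for w i j s
    unfolding F_def phi_def
    by (simp add: pair_term[OF _ ij] pos sum_negf)
  have key: "ereal R \<le> Gfun nu K m R" if R: "ereal R < R_static nu K m" for R
  proof -
    define A where "A w = {(SUP s\<in>{0..1}. ereal (- (\<Sum>a<K. w a *
          ln (\<Sum>x\<in>UNIV. nu i a x powr s * nu j a x powr (1 - s))))) | i j. i < m \<and> j < m \<and> i \<noteq> j}" for w
    obtain w where w: "w \<in> prob_simplex K" and Rw: "ereal R < Min (A w)"
      using R unfolding R_static_def A_def[symmetric] by (auto simp: less_SUP_iff)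
    have finA: "finite (A w)"
    proof (rule finite_subset)
      show "A w \<subseteq> (\<lambda>(i,j). SUP s\<in>{0..1}. ereal (- (\<Sum>a<K. w a *
          ln (\<Sum>x\<in>UNIV. nu i a x powr s * nu j a x powr (1 - s))))) ` ({..<m} \<times> {..<m})"
        unfolding A_def by auto
    qed simp
    have ex: "\<exists>s\<in>{0..1}. R < F w (beta_pair i j s)" if ij: "i < j" "j < m" for i j
    proof -
      have "ereal R < (SUP s\<in>{0..1}. ereal (- (\<Sum>a<K. w a *
          ln (\<Sum>x\<in>UNIV. nu i a x powr s * nu j a x powr (1 - s)))))"
        using Rw Min_le[OF finA, of "(SUP s\<in>{0..1}. ereal (- (\<Sum>a<K. w a *
          ln (\<Sum>x\<in>UNIV. nu i a x powr s * nu j a x powr (1 - s)))))"] ij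
        unfolding A_def by force
      thus ?thesis by (auto simp: less_SUP_iff term_eq[OF ij])
    qed
    show ?thesis
    proof (cases "ereal R < Min {Spair nu K m i j | i j. i < j \<and> j < m}")
      case True thus ?thesis unfolding Gfun_def by simp
    next
      case False
      define M where "M = Mset nu K m R"
      have Msub: "M \<subseteq> {..<m} \<times> {..<m}" unfolding M_def Mset_def by auto
      hence finM: "finite M" by (rule finite_subset) simp
      define bsel where "bsel p = (SOME s. s \<in> {0..1} \<and> R < F w (beta_pair (fst p) (snd p) s))" for p
      have bsel: "bsel p \<in> {0..1} \<and> R < F w (beta_pair (fst p) (snd p) (bsel p))" if "p \<in> M" for p
      proof -
        have "fst p < snd p" "snd p < m" using that unfolding M_def Mset_def by auto
        from ex[OF this] have "\<exists>s. s \<in> {0..1} \<and> R < F w (beta_pair (fst p) (snd p) s)" by blast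
        from someI_ex[OF this] show ?thesis unfolding bsel_def .
      qed
      have "ereal R \<le> (INF lam\<in>{lam :: nat \<times> nat \<Rightarrow> real. (\<forall>p\<in>M. 0 \<le> lam p) \<and> (\<Sum>p\<in>M. lam p) = 1}.
           ereal (Lfun nu K m (\<lambda>k. \<Sum>p\<in>M. lam p * beta_pair (fst p) (snd p) (bsel p) k)))"
      proof (rule INF_greatest)
        fix lam assume "lam \<in> {lam :: nat \<times> nat \<Rightarrow> real. (\<forall>p\<in>M. 0 \<le> lam p) \<and> (\<Sum>p\<in>M. lam p) = 1}"
        hence l0: "\<And>p. p \<in> M \<Longrightarrow> 0 \<le> lam p" and l1: "sum lam M = 1" by auto
        have Mne: "M \<noteq> {}" using l1 by auto
        have "R = (\<Sum>p\<in>M. lam p * R)" using l1 by (simp add: sum_distrib_right[symmetric])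
        also have "\<dots> \<le> (\<Sum>p\<in>M. lam p * F w (beta_pair (fst p) (snd p) (bsel p)))"
          by (rule sum_mono, rule mult_left_mono) (use bsel l0 in \<open>auto intro: less_imp_le\<close>)
        also have "\<dots> \<le> F w (\<lambda>k. \<Sum>p\<in>M. lam p * beta_pair (fst p) (snd p) (bsel p) k)"
          by (rule Fconc[OF w finM Mne l0 l1])
        also have "\<dots> \<le> Lfun nu K m (\<lambda>k. \<Sum>p\<in>M. lam p * beta_pair (fst p) (snd p) (bsel p) k)"
          by (rule FL[OF w])
        finally show "ereal R \<le> ereal (Lfun nu K m (\<lambda>k. \<Sum>p\<in>M. lam p * beta_pair (fst p) (snd p) (bsel p) k))"
          by simp
      qed
      also have "\<dots> \<le> (SUP b\<in>{b :: nat \<times> nat \<Rightarrow> real. \<forall>p\<in>M. b p \<in> {0..1}}.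
         INF lam\<in>{lam :: nat \<times> nat \<Rightarrow> real. (\<forall>p\<in>M. 0 \<le> lam p) \<and> (\<Sum>p\<in>M. lam p) = 1}.
           ereal (Lfun nu K m (\<lambda>k. \<Sum>p\<in>M. lam p * beta_pair (fst p) (snd p) (b p) k)))"
        by (rule SUP_upper[where f = "\<lambda>b. INF lam\<in>{lam :: nat \<times> nat \<Rightarrow> real. (\<forall>p\<in>M. 0 \<le> lam p) \<and> (\<Sum>p\<in>M. lam p) = 1}.
           ereal (Lfun nu K m (\<lambda>k. \<Sum>p\<in>M. lam p * beta_pair (fst p) (snd p) (b p) k))"]) (use bsel in auto)
      finally show ?thesis using False unfolding Gfun_def M_def Let_def by simp
    qed
  qed
  show ?thesis
  proof (rule ccontr)
    assume "\<not> ?thesis"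
    hence "R_approach nu K m < R_static nu K m" by simp
    then obtain R :: real where R1: "R_approach nu K m < ereal R" and R2: "ereal R < R_static nu K m"
      using ereal_dense2 by blast
    have "ereal R \<le> R_approach nu K m" unfolding R_approach_def
      by (rule Sup_upper) (use key[OF R2] in auto)
    with R1 show False by simp
  qed
qed

end
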